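(* Let $n\ge 5$ and let $\sigma$ be a maximal simplex of $\Delta_n$ that covers all places. If there exists $w\in\sigma$ with $N(w)\cap\sigma=\{v\}$, then $\sigma=N(v)\cup K_v^{i_0,j_0,k_0}$ for some distinct $i_0,j_0,k_0\in[n]$.
   Context: $\mathbb{I}_n$ is the $n$-dimensional hypercube graph on vertex set $\{0,1\}^n$ (adjacent iff differing in exactly one coordinate), with Hamming distance $d(v,w)=\#\{i: v(i)\ne w(i)\}$, $v(i)$ the $i$-th coordinate. $\Delta_n=\mathcal{VR}(\mathbb{I}_n;3)$ is the simplicial complex whose simplices are the subsets $\sigma\subseteq\{0,1\}^n$ with $d(x,y)\le 3$ for all $x,y\in\sigma$. A simplex $\sigma$ covers all places if for each $i\in[n]=\{1,\dots,n\}$ there are $v,w\in\sigma$ with $v(i)=1$ and $w(i)=0$. For a vertex $v$ and distinct $i_1,\dots,i_k$, $v^{i_1,\dots,i_k}$ is $v$ with exactly coordinates $i_1,\dots,i_k$ changed. $N(v)=\{v^i: i\in[n]\}$. For distinct $i,j,k$, $K_v^{i,j,k}=\{v,v^{i,j},v^{j,k},v^{i,k}\}$. *)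

theory Defs
  imports Main
begin

text \<open>Vertices of the n-cube: functions nat => bool that are False outside [n] = {1..n}
  (True encodes coordinate value 1, False encodes 0).\<close>
definition cube_verts :: "nat \<Rightarrow> (nat \<Rightarrow> bool) set" where
  "cube_verts n = {v. \<forall>i. i \<notin> {1..n} \<longrightarrow> \<not> v i}"

definition hdist :: "nat \<Rightarrow> (nat \<Rightarrow> bool) \<Rightarrow> (nat \<Rightarrow> bool) \<Rightarrow> nat" where
  "hdist n v w = card {i \<in> {1..n}. v i \<noteq> w i}"

text \<open>Simplices of Delta_n = VR(I_n; 3): nonempty sets of vertices of pairwise distance at most 3.\<close>
definition is_simplex :: "nat \<Rightarrow> (nat \<Rightarrow> bool) set \<Rightarrow> bool" where
  "is_simplex n \<sigma> \<longleftrightarrow> \<sigma> \<noteq> {} \<and> \<sigma> \<subseteq> cube_verts n \<and>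
     (\<forall>x\<in>\<sigma>. \<forall>y\<in>\<sigma>. hdist n x y \<le> 3)"

definition maximal_simplex :: "nat \<Rightarrow> (nat \<Rightarrow> bool) set \<Rightarrow> bool" where
  "maximal_simplex n \<sigma> \<longleftrightarrow> is_simplex n \<sigma> \<and> (\<forall>\<tau>. is_simplex n \<tau> \<and> \<sigma> \<subseteq> \<tau> \<longrightarrow> \<tau> = \<sigma>)"

definition covers_all_places :: "nat \<Rightarrow> (nat \<Rightarrow> bool) set \<Rightarrow> bool" where
  "covers_all_places n \<sigma> \<longleftrightarrow> (\<forall>i\<in>{1..n}. \<exists>v\<in>\<sigma>. \<exists>w\<in>\<sigma>. v i \<and> \<not> w i)"

definition flip :: "(nat \<Rightarrow> bool) \<Rightarrow> nat set \<Rightarrow> (nat \<Rightarrow> bool)" where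
  "flip v I = (\<lambda>i. if i \<in> I then \<not> v i else v i)"

definition nbhd :: "nat \<Rightarrow> (nat \<Rightarrow> bool) \<Rightarrow> (nat \<Rightarrow> bool) set" where
  "nbhd n v = {flip v {i} | i. i \<in> {1..n}}"

definition Kset :: "(nat \<Rightarrow> bool) \<Rightarrow> nat \<Rightarrow> nat \<Rightarrow> nat \<Rightarrow> (nat \<Rightarrow> bool) set" where
  "Kset v i j k = {v, flip v {i, j}, flip v {j, k}, flip v {i, k}}"

end

theory Submission
  imports Defs
begin

definition sd :: "'a set \<Rightarrow> 'a set \<Rightarrow> 'a set" where
  "sd A B = (A - B) \<union> (B - A)"

lemma sd_finite[simp]: "finite A \<Longrightarrow> finite B \<Longrightarrow> finite (sd A B)"
  by (simp add: sd_def)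

lemma card4: "finite S \<Longrightarrow> a \<in> S \<Longrightarrow> b \<in> S \<Longrightarrow> c \<in> S \<Longrightarrow> d \<in> S \<Longrightarrow>
  a \<noteq> b \<Longrightarrow> a \<noteq> c \<Longrightarrow> a \<noteq> d \<Longrightarrow> b \<noteq> c \<Longrightarrow> b \<noteq> d \<Longrightarrow> c \<noteq> d \<Longrightarrow> 4 \<le> card S"
proof -
  assume h: "finite S" "a \<in> S" "b \<in> S" "c \<in> S" "d \<in> S"
    "a \<noteq> b" "a \<noteq> c" "a \<noteq> d" "b \<noteq> c" "b \<noteq> d" "c \<noteq> d"
  have "card {a,b,c,d} = 4" using h by simp
  moreover have "{a,b,c,d} \<subseteq> S" using h by auto
  ultimately show ?thesis using card_mono[OF h(1)] by metis
qed

lemma le3: "S \<subseteq> {x,y,z} \<Longrightarrow> card S \<le> 3"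
proof -
  assume "S \<subseteq> {x,y,z}"
  hence "card S \<le> card {x,y,z}" by (simp add: card_mono)
  also have "\<dots> \<le> 3" by (simp add: card_insert_if)
  finally show ?thesis .
qed

lemma tri_lem: "a \<noteq> b \<Longrightarrow> i \<noteq> j \<Longrightarrow> j \<noteq> k \<Longrightarrow> k \<noteq> i \<Longrightarrow>
 a = i \<or> a = j \<or> b = i \<or> b = j \<Longrightarrow> a = j \<or> a = k \<or> b = j \<or> b = k \<Longrightarrow>
 a = i \<or> a = k \<or> b = i \<or> b = k \<Longrightarrow> {a,b} = {i,j} \<or> {a,b} = {j,k} \<or> {a,b} = {i,k}"
  by (elim disjE) (auto simp: insert_commute)
lemma tri_lem2: "a \<noteq> b \<Longrightarrow> i \<noteq> j \<Longrightarrow> j \<noteq> k \<Longrightarrow> k \<noteq> i \<Longrightarrow>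
 a = i \<or> a = j \<or> b = i \<or> b = j \<Longrightarrow> a = j \<or> a = k \<or> b = j \<or> b = k \<Longrightarrow>
 a = i \<or> a = k \<or> b = i \<or> b = k \<Longrightarrow> x = a \<or> x = b \<Longrightarrow> x \<noteq> i \<Longrightarrow> x \<noteq> j \<Longrightarrow> x \<noteq> k \<Longrightarrow> False"
  by (elim disjE) auto

lemma core:
  fixes F :: "nat set set" and U :: "nat set" and l :: nat
  assumes fU: "finite U" and cU: "card U \<ge> 5" and lU: "l \<in> U"
    and sub: "\<forall>X\<in>F. X \<subseteq> U" and e: "{} \<in> F" and sl: "{l} \<in> F"
    and sing: "\<forall>c\<in>U. {c} \<in> F \<longrightarrow> c = l"
    and dist: "\<forall>X\<in>F. \<forall>Y\<in>F. card (sd X Y) \<le> 3"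
    and cov: "\<forall>i\<in>U. \<exists>X\<in>F. i \<in> X"
    and mx: "\<forall>X. X \<subseteq> U \<and> (\<forall>Y\<in>F. card (sd X Y) \<le> 3) \<longrightarrow> X \<in> F"
  shows "\<exists>i j k. i\<in>U \<and> j\<in>U \<and> k\<in>U \<and> i \<noteq> j \<and> j \<noteq> k \<and> i \<noteq> k \<and>
     i \<noteq> l \<and> j \<noteq> l \<and> k \<noteq> l \<and>
     F = {{}, {l}} \<union> {{l,m}|m. m\<in>U \<and> m\<noteq>l} \<union> {{l,i,j},{l,j,k},{l,i,k}}"
proof -
  define T where "T a b \<longleftrightarrow> a \<noteq> b \<and> a \<noteq> l \<and> b \<noteq> l \<and> a \<in> U \<and> b \<in> U \<and> {l,a,b} \<in> F" for a b
  define A where "A a b \<longleftrightarrow> a \<noteq> b \<and> a \<noteq> l \<and> b \<noteq> l \<and> a \<in> U \<and> b \<in> U \<and> {a,b} \<in> F" for a b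
  have Tsym: "T a b \<Longrightarrow> T b a" for a b unfolding T_def by (auto simp: insert_commute)
  have cls: "X = {} \<or> X = {l} \<or> (\<exists>m\<in>U. m \<noteq> l \<and> X = {l,m}) \<or> (\<exists>a b. A a b \<and> X = {a,b})
     \<or> (\<exists>a b. T a b \<and> X = {l,a,b})" if X: "X \<in> F" for X
  proof -
    have XU: "X \<subseteq> U" using sub X by auto
    have fX: "finite X" using XU fU finite_subset by auto
    have "sd X {} = X" by (auto simp: sd_def)
    hence c3: "card X \<le> 3" using dist X e by metis
    consider "card X = 0" | "card X = 1" | "card X = 2" | "card X = 3" using c3 by linarith
    thus ?thesis
    proof cases
      case 1 thus ?thesis using fX by simp
    next
      case 2 then obtain c where "X = {c}" by (auto simp: card_1_singleton_iff)
      thus ?thesis using sing X XU by auto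
    next
      case 3 then obtain a b where ab: "X = {a,b}" "a \<noteq> b" by (auto simp: card_2_iff)
      show ?thesis
      proof (cases "a = l \<or> b = l")
        case True thus ?thesis using ab XU by (auto simp: insert_commute)
      next
        case False thus ?thesis using ab XU X unfolding A_def by blast
      qed
    next
      case 4 then obtain a b c where abc: "X = {a,b,c}" "a \<noteq> b" "b \<noteq> c" "a \<noteq> c"
        by (auto simp: card_3_iff)
      show ?thesis
      proof (cases "l \<in> X")
        case False
        have "4 \<le> card (sd X {l})"
          by (rule card4[of _ a b c l]) (use False abc in \<open>auto simp: sd_def\<close>)
        thus ?thesis using dist X sl by fastforce
      next
        case True
        then consider "l = a" | "l = b" | "l = c" using abc by auto
        thus ?thesis
        proof cases
          case 1 thus ?thesis using abc X XU unfolding T_def by blast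
        next
          case 2 have "X = {l,a,c}" using 2 abc by auto
          thus ?thesis using abc X XU 2 unfolding T_def by blast
        next
          case 3 have "X = {l,a,b}" using 3 abc by auto
          thus ?thesis using abc X XU 3 unfolding T_def by blast
        qed
      qed
    qed
  qed
  have TT: "a = c \<or> a = d \<or> b = c \<or> b = d" if "T a b" "T c d" for a b c d
  proof (rule ccontr)
    assume n: "\<not> ?thesis"
    have "4 \<le> card (sd {l,a,b} {l,c,d})"
      by (rule card4[of _ a b c d]) (use n that in \<open>auto simp: sd_def T_def\<close>)
    thus False using dist that unfolding T_def by fastforce
  qed
  have AT: "a = c \<or> a = d \<or> b = c \<or> b = d" if "A a b" "T c d" for a b c d
  proof (rule ccontr)
    assume n: "\<not> ?thesis"
    have "4 \<le> card (sd {a,b} {l,c,d})"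
      by (rule card4[of _ a b c l]) (use n that in \<open>auto simp: sd_def T_def A_def\<close>)
    thus False using dist that unfolding T_def A_def by fastforce
  qed
  have AB: "m = a \<or> m = b" if "A a b" "{l,m} \<in> F" "m \<noteq> l" for a b m
  proof (rule ccontr)
    assume n: "\<not> ?thesis"
    have "4 \<le> card (sd {a,b} {l,m})"
      by (rule card4[of _ a b l m]) (use n that in \<open>auto simp: sd_def A_def\<close>)
    thus False using dist that unfolding A_def by fastforce
  qed
  have nostar: False if c: "c \<in> U" "c \<noteq> l" "\<forall>a b. T a b \<longrightarrow> c = a \<or> c = b" for c
  proof -
    have "{c} \<in> F"
    proof (rule mx[rule_format], intro conjI ballI)
      show "{c} \<subseteq> U" using c by auto
    next
      fix Y assume Y: "Y \<in> F"
      from cls[OF Y] show "card (sd {c} Y) \<le> 3"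
      proof (elim disjE exE conjE bexE)
        assume "Y = {}" thus ?thesis by (intro le3[of _ c c c]) (auto simp: sd_def)
      next
        assume "Y = {l}" thus ?thesis by (intro le3[of _ c l l]) (auto simp: sd_def)
      next
        fix m assume "Y = {l,m}" thus ?thesis by (intro le3[of _ c l m]) (auto simp: sd_def)
      next
        fix a b assume "Y = {a,b}" thus ?thesis by (intro le3[of _ c a b]) (auto simp: sd_def)
      next
        fix a b assume ab: "T a b" "Y = {l,a,b}"
        hence "c = a \<or> c = b" using c by auto
        thus ?thesis using ab by (intro le3[of _ l a b]) (auto simp: sd_def)
      qed
    qed
    thus False using sing c by auto
  qed

  obtain c0 where c0: "c0 \<in> U" "c0 \<noteq> l"
  proof -
    have "U \<noteq> {l}" using cU by auto
    thus ?thesis using that lU by blast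
  qed
  obtain i j where Tij: "T i j" using nostar[OF c0] by blast
  obtain k where Tjk: "T j k" and ki: "k \<noteq> i"
  proof -
    obtain a b where ab: "T a b" "i \<noteq> a" "i \<noteq> b"
      using nostar[of i] Tij unfolding T_def by blast
    hence "j = a \<or> j = b" using TT[OF Tij ab(1)] by auto
    thus ?thesis using ab Tsym that unfolding T_def by blast
  qed
  have Tik: "T i k"
  proof -
    obtain a b where ab: "T a b" "j \<noteq> a" "j \<noteq> b"
      using nostar[of j] Tij unfolding T_def by blast
    have "i = a \<or> i = b" using TT[OF Tij ab(1)] ab by auto
    moreover have "k = a \<or> k = b" using TT[OF Tjk ab(1)] ab by auto
    ultimately show ?thesis using ab Tsym ki by blast
  qed
  have dij: "i \<noteq> j" "j \<noteq> k" "i \<noteq> l" "j \<noteq> l" "k \<noteq> l" "i \<in> U" "j \<in> U" "k \<in> U"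
    using Tij Tjk unfolding T_def by auto
  have tri: "{a,b} = {i,j} \<or> {a,b} = {j,k} \<or> {a,b} = {i,k}" if "T a b" for a b
  proof -
    have ab: "a \<noteq> b" using that T_def by auto
    have "a = i \<or> a = j \<or> b = i \<or> b = j" using TT[OF that Tij] .
    moreover have "a = j \<or> a = k \<or> b = j \<or> b = k" using TT[OF that Tjk] .
    moreover have "a = i \<or> a = k \<or> b = i \<or> b = k" using TT[OF that Tik] .
    ultimately show ?thesis using tri_lem[OF ab dij(1,2) ki] by blast
  qed
  obtain x where x: "x \<in> U" "x \<noteq> l" "x \<noteq> i" "x \<noteq> j" "x \<noteq> k"
  proof -
    have "card {l,i,j,k} \<le> 4" by (simp add: card_insert_if)
    hence "\<not> U \<subseteq> {l,i,j,k}" using cU card_mono[of "{l,i,j,k}" U] by auto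
    thus ?thesis using that by blast
  qed
  have noA: False if "A a b" for a b
  proof -
    have h1: "a = i \<or> a = j \<or> b = i \<or> b = j" using AT[OF that Tij] .
    have h2: "a = j \<or> a = k \<or> b = j \<or> b = k" using AT[OF that Tjk] .
    have h3: "a = i \<or> a = k \<or> b = i \<or> b = k" using AT[OF that Tik] .
    have nab: "a \<noteq> b" using that A_def by auto
    obtain X where X: "X \<in> F" "x \<in> X" using cov x by blast
    have "{l,x} \<in> F"
      using cls[OF X(1)]
    proof (elim disjE exE conjE bexE)
      assume "X = {}" thus ?thesis using X by simp
    next
      assume "X = {l}" thus ?thesis using X x by simp
    next
      fix m assume "m \<in> U" "m \<noteq> l" "X = {l,m}"
      hence "X = {l,x}" using X x by blast
      thus ?thesis using X by simp
    next
      fix a' b' assume h: "A a' b'" "X = {a',b'}"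
      have g1: "a' = i \<or> a' = j \<or> b' = i \<or> b' = j" using AT[OF h(1) Tij] .
      have g2: "a' = j \<or> a' = k \<or> b' = j \<or> b' = k" using AT[OF h(1) Tjk] .
      have g3: "a' = i \<or> a' = k \<or> b' = i \<or> b' = k" using AT[OF h(1) Tik] .
      have "a' \<noteq> b'" using h A_def by auto
      from tri_lem2[OF this dij(1,2) ki g1 g2 g3 _ x(3-5)] show ?thesis using h X by auto
    next
      fix a' b' assume h: "T a' b'" "X = {l,a',b'}"
      have "x \<in> {a',b'}" using h X x by blast
      hence "x \<in> {i,j} \<or> x \<in> {j,k} \<or> x \<in> {i,k}" using tri[OF h(1)] by metis
      hence False using x by blast
      thus ?thesis ..
    qed
    hence "x = a \<or> x = b" using AB[OF that] x by auto
    thus False using tri_lem2[OF nab dij(1,2) ki h1 h2 h3 _ x(3-5)] by blast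
  qed
  have Blm: "{l,m} \<in> F" if "m \<in> U" "m \<noteq> l" for m
  proof (rule mx[rule_format], intro conjI ballI)
    show "{l,m} \<subseteq> U" using that lU by auto
  next
    fix Y assume Y: "Y \<in> F"
    from cls[OF Y] show "card (sd {l,m} Y) \<le> 3"
    proof (elim disjE exE conjE bexE)
      assume "Y = {}" thus ?thesis by (intro le3[of _ l m m]) (auto simp: sd_def)
    next
      assume "Y = {l}" thus ?thesis by (intro le3[of _ m m m]) (auto simp: sd_def)
    next
      fix m' assume "Y = {l,m'}" thus ?thesis by (intro le3[of _ m m' m']) (auto simp: sd_def)
    next
      fix a b assume "A a b" thus ?thesis using noA by blast
    next
      fix a b assume ab: "Y = {l,a,b}"
      thus ?thesis by (intro le3[of _ m a b]) (auto simp: sd_def)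
    qed
  qed
  have "F = {{}, {l}} \<union> {{l,m}|m. m\<in>U \<and> m\<noteq>l} \<union> {{l,i,j},{l,j,k},{l,i,k}}"
  proof (intro equalityI subsetI)
    fix X assume X: "X \<in> F"
    from cls[OF X] show "X \<in> {{}, {l}} \<union> {{l,m}|m. m\<in>U \<and> m\<noteq>l} \<union> {{l,i,j},{l,j,k},{l,i,k}}"
    proof (elim disjE exE conjE bexE)
      fix a b assume "A a b" thus ?thesis using noA by blast
    next
      fix a b assume ab: "T a b" "X = {l,a,b}"
      have "X = insert l {a,b}" using ab by auto
      hence "X = insert l {i,j} \<or> X = insert l {j,k} \<or> X = insert l {i,k}" using tri[OF ab(1)] by metis
      thus ?thesis by blast
    qed (simp, simp, blast)
  next
    fix X assume X: "X \<in> {{}, {l}} \<union> {{l,m}|m. m\<in>U \<and> m\<noteq>l} \<union> {{l,i,j},{l,j,k},{l,i,k}}"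
    have t: "{l,i,j} \<in> F" "{l,j,k} \<in> F" "{l,i,k} \<in> F" using Tij Tjk Tik unfolding T_def by auto
    from X consider "X = {}" | "X = {l}" | "\<exists>m. X = {l,m} \<and> m\<in>U \<and> m\<noteq>l" | "X = {l,i,j}" | "X = {l,j,k}" | "X = {l,i,k}"
      by blast
    thus "X \<in> F"
    proof cases
      case 3 then obtain m where "X = {l,m}" "m\<in>U" "m\<noteq>l" by blast
      thus ?thesis using Blm by simp
    qed (use e sl t in simp_all)
  qed
  show ?thesis
    apply (rule exI[of _ i], rule exI[of _ j], rule exI[of _ k])
    using dij ki \<open>F = _\<close> by blast
qed

lemma flip_D:
  assumes "x \<in> cube_verts n" "w \<in> cube_verts n"
  shows "flip w {i \<in> {1..n}. x i \<noteq> w i} = x"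
  using assms unfolding flip_def cube_verts_def by (intro ext) auto

lemma D_flip:
  assumes "I \<subseteq> {1..n}" "w \<in> cube_verts n"
  shows "{i \<in> {1..n}. flip w I i \<noteq> w i} = I"
  using assms unfolding flip_def by auto

lemma flip_cube:
  assumes "I \<subseteq> {1..n}" "w \<in> cube_verts n"
  shows "flip w I \<in> cube_verts n"
  using assms unfolding flip_def cube_verts_def by auto

lemma hdist_D:
  "hdist n x y = card (sd {i \<in> {1..n}. x i \<noteq> w i} {i \<in> {1..n}. y i \<noteq> w i})"
proof -
  have "{i \<in> {1..n}. x i \<noteq> y i} = sd {i \<in> {1..n}. x i \<noteq> w i} {i \<in> {1..n}. y i \<noteq> w i}"
    unfolding sd_def by auto
  thus ?thesis unfolding hdist_def by simp
qed

lemma flip_flip: "flip (flip w A) B = flip w (sd A B)"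
  unfolding flip_def sd_def by (intro ext) auto

lemma sd_sym: "sd A B = sd B A" unfolding sd_def by auto

theorem mainTheorem8:
  fixes n :: nat and \<sigma> :: "(nat \<Rightarrow> bool) set" and v w :: "nat \<Rightarrow> bool"
  assumes "n \<ge> 5"
    and "maximal_simplex n \<sigma>"
    and "covers_all_places n \<sigma>"
    and "w \<in> \<sigma>"
    and "nbhd n w \<inter> \<sigma> = {v}"
  shows "\<exists>i0 j0 k0. i0 \<in> {1..n} \<and> j0 \<in> {1..n} \<and> k0 \<in> {1..n} \<and>
           i0 \<noteq> j0 \<and> j0 \<noteq> k0 \<and> i0 \<noteq> k0 \<and>
           \<sigma> = nbhd n v \<union> Kset v i0 j0 k0"
proof -
  define U where "U = {1..n}"
  define D where "D x = {i \<in> {1..n}. x i \<noteq> w i}" for x :: "nat \<Rightarrow> bool"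
  define F where "F = D ` \<sigma>"
  have simp: "is_simplex n \<sigma>" and mx0: "\<And>\<tau>. is_simplex n \<tau> \<Longrightarrow> \<sigma> \<subseteq> \<tau> \<Longrightarrow> \<tau> = \<sigma>"
    using assms(2) unfolding maximal_simplex_def by auto
  have cube: "\<sigma> \<subseteq> cube_verts n" and pw: "\<forall>x\<in>\<sigma>. \<forall>y\<in>\<sigma>. hdist n x y \<le> 3"
    using simp unfolding is_simplex_def by auto
  have wc: "w \<in> cube_verts n" using cube assms(4) by auto
  have hD: "hdist n x y = card (sd (D x) (D y))" for x y
    unfolding D_def by (rule hdist_D)
  have fD: "x \<in> cube_verts n \<Longrightarrow> flip w (D x) = x" for x unfolding D_def using flip_D wc by blast
  have Df: "I \<subseteq> U \<Longrightarrow> D (flip w I) = I" for I unfolding D_def U_def using D_flip wc by blast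
  have fc: "I \<subseteq> U \<Longrightarrow> flip w I \<in> cube_verts n" for I unfolding U_def using flip_cube wc by blast
  have vN: "v \<in> nbhd n w" "v \<in> \<sigma>" using assms(5) by auto
  then obtain l where l: "l \<in> U" "v = flip w {l}" unfolding nbhd_def U_def by auto
  have fU: "finite U" unfolding U_def by simp
  have cU: "card U \<ge> 5" unfolding U_def using assms(1) by simp
  have sub: "\<forall>X\<in>F. X \<subseteq> U" unfolding F_def D_def U_def by auto
  have e: "{} \<in> F"
  proof -
    have "D w = {}" unfolding D_def by auto
    thus ?thesis using assms(4) unfolding F_def by force
  qed
  have Dv: "D v = {l}" using l Df by simp
  have sl: "{l} \<in> F" using Dv vN unfolding F_def by force
  have sing: "\<forall>c\<in>U. {c} \<in> F \<longrightarrow> c = l"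
  proof (intro ballI impI)
    fix c assume c: "c \<in> U" "{c} \<in> F"
    then obtain x where x: "x \<in> \<sigma>" "{c} = D x" unfolding F_def by auto
    have "x = flip w {c}" using fD[of x] x cube by auto
    hence "x \<in> nbhd n w" using c unfolding nbhd_def U_def by auto
    hence "x = v" using x assms(5) by auto
    thus "c = l" using x Dv by auto
  qed
  have dist: "\<forall>X\<in>F. \<forall>Y\<in>F. card (sd X Y) \<le> 3"
    using pw hD unfolding F_def by auto
  have cov: "\<forall>i\<in>U. \<exists>X\<in>F. i \<in> X"
  proof
    fix i assume i: "i \<in> U"
    then obtain a b where ab: "a \<in> \<sigma>" "b \<in> \<sigma>" "a i" "\<not> b i"
      using assms(3) unfolding covers_all_places_def U_def by blast
    show "\<exists>X\<in>F. i \<in> X"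
    proof (cases "w i")
      case True hence "i \<in> D b" using ab i unfolding D_def U_def by auto
      thus ?thesis using ab unfolding F_def by auto
    next
      case False hence "i \<in> D a" using ab i unfolding D_def U_def by auto
      thus ?thesis using ab unfolding F_def by auto
    qed
  qed
  have mx: "\<forall>X. X \<subseteq> U \<and> (\<forall>Y\<in>F. card (sd X Y) \<le> 3) \<longrightarrow> X \<in> F"
  proof (intro allI impI, elim conjE)
    fix X assume X: "X \<subseteq> U" "\<forall>Y\<in>F. card (sd X Y) \<le> 3"
    let ?x = "flip w X"
    have DX: "D ?x = X" using Df X by simp
    have hx: "hdist n ?x y \<le> 3" if "y \<in> \<sigma>" for y
    proof -
      have "D y \<in> F" using that unfolding F_def by simp
      hence "card (sd X (D y)) \<le> 3" using X(2) by blast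
      thus ?thesis using hD[of ?x y] DX by simp
    qed
    have "is_simplex n (insert ?x \<sigma>)"
      unfolding is_simplex_def
    proof (intro conjI ballI)
      show "insert ?x \<sigma> \<noteq> {}" by simp
      show "insert ?x \<sigma> \<subseteq> cube_verts n" using cube fc X by auto
    next
      fix a b assume a: "a \<in> insert ?x \<sigma>" and b: "b \<in> insert ?x \<sigma>"
      have sym: "hdist n a b = hdist n b a" for a b using hD[of a b] hD[of b a] sd_sym[of "D a" "D b"] by simp
      have z: "hdist n ?x ?x = 0" using hD[of ?x ?x] by (simp add: sd_def)
      show "hdist n a b \<le> 3"
      proof (cases "a = ?x")
        case True thus ?thesis
        proof (cases "b = ?x")
          case True thus ?thesis using \<open>a = ?x\<close> z by simp
        next
          case False hence "b \<in> \<sigma>" using b by simp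
          thus ?thesis using hx \<open>a = ?x\<close> by simp
        qed
      next
        case False hence aS: "a \<in> \<sigma>" using a by simp
        show ?thesis
        proof (cases "b = ?x")
          case True thus ?thesis using hx[OF aS] sym[of a b] by simp
        next
          case False hence "b \<in> \<sigma>" using b by simp
          thus ?thesis using pw aS by blast
        qed
      qed
    qed
    hence "insert ?x \<sigma> = \<sigma>" by (rule mx0) auto
    hence "?x \<in> \<sigma>" by auto
    thus "X \<in> F" using DX unfolding F_def by force
  qed
  obtain i j k where ijk: "i\<in>U" "j\<in>U" "k\<in>U" "i \<noteq> j" "j \<noteq> k" "i \<noteq> k"
     "i \<noteq> l" "j \<noteq> l" "k \<noteq> l"
     and Feq: "F = {{}, {l}} \<union> {{l,m}|m. m\<in>U \<and> m\<noteq>l} \<union> {{l,i,j},{l,j,k},{l,i,k}}"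
    using core[OF fU cU l(1) sub e sl sing dist cov mx] by blast
  have sig: "\<sigma> = flip w ` F"
  proof -
    have "flip w ` F = (\<lambda>x. flip w (D x)) ` \<sigma>" by (simp add: F_def image_image)
    also have "\<dots> = (\<lambda>x. x) ` \<sigma>" using fD cube by (intro image_cong) auto
    finally show ?thesis by simp
  qed
  have N: "nbhd n v = flip w ` ({{}} \<union> {{l,m}|m. m\<in>U \<and> m\<noteq>l})"
  proof -
    have "flip v {m} = flip w (if m = l then {} else {l,m})" for m
      using l(2) flip_flip[of w "{l}" "{m}"] by (auto simp: sd_def insert_commute)
    hence "nbhd n v = {flip w (if m = l then {} else {l,m}) | m. m \<in> U}"
      unfolding nbhd_def U_def by simp
    also have "\<dots> = flip w ` ({{}} \<union> {{l,m}|m. m\<in>U \<and> m\<noteq>l})"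
      using l(1) by auto
    finally show ?thesis .
  qed
  have K: "Kset v i j k = flip w ` {{l},{l,i,j},{l,j,k},{l,i,k}}"
  proof -
    have "flip v {a,b} = flip w {l,a,b}" if "a \<noteq> l" "b \<noteq> l" for a b
    proof -
      have "sd {l} {a,b} = {l,a,b}" using that by (auto simp: sd_def)
      thus ?thesis using l(2) flip_flip[of w "{l}" "{a,b}"] by simp
    qed
    thus ?thesis unfolding Kset_def using l(2) ijk by auto
  qed
  have "\<sigma> = nbhd n v \<union> Kset v i j k"
  proof -
    have "F = ({{}} \<union> {{l,m}|m. m\<in>U \<and> m\<noteq>l}) \<union> {{l},{l,i,j},{l,j,k},{l,i,k}}"
      unfolding Feq by blast
    thus ?thesis unfolding sig N K by (simp only: image_Un)
  qed
  thus ?thesis using ijk unfolding U_def by blast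
qed

end
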